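(* Let $n=2$ and $z=x+iy$ with $x,y\in\mathbb{R}$, $y\neq0$. Then $$\psi(x+iy)=\begin{cases}\frac83|y|, & x^2+y^2\le1 \text{ and } |x|\le\frac12,\\[2pt] \frac{|y|}{3|x|^3}, & (|x|-1)^2+y^2\le1 \text{ and } |x|>\frac12,\\[2pt] \frac{8|y|}{3(x^2+y^2)^3}, & (|x|-1)^2+y^2>1\text{ and } x^2+y^2>1.\end{cases}$$
   Context: For $n=2$ and $z\in\mathbb{C}\setminus\mathbb{R}$, $D_z$ is the set of $t\in\mathbb{R}$ with $|t|\le1$, $\left|z\,t\left(z-\frac{\Im z^{2}}{\Im z}\right)\right|\le 1$ and $\left|t\frac{\Im z^{2}}{\Im z}\right|\le 1$, and $$\psi(z)=\frac{1}{|\Im z|}\int_{D_z}\left|t\left(2z-\frac{\Im z^{2}}{\Im z}\right)\right|^2dt.$$ *)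

theory Defs
  imports "HOL-Analysis.Analysis"
begin

definition Dz :: "complex \<Rightarrow> real set" where
  "Dz z = {t::real. \<bar>t\<bar> \<le> 1
      \<and> cmod (z * of_real t * (z - of_real (Im (z^2) / Im z))) \<le> 1
      \<and> \<bar>t * (Im (z^2) / Im z)\<bar> \<le> 1}"

definition psi :: "complex \<Rightarrow> real" where
  "psi z = (1 / \<bar>Im z\<bar>) *
     (LINT t:Dz z|lborel. (cmod (of_real t * (2 * z - of_real (Im (z^2) / Im z))))^2)"

end

theory Submission
  imports Defs
begin

lemma int_sq:
  fixes a c :: real
  assumes "a \<ge> 0"
  shows "(LINT t:{-a..a}|lborel. c * t^2) = 2*c*a^3/3"
proof -
  have "(LINT t:{-a..a}|lborel. c * t^2) = (\<lambda>t. c*t^3/3) a - (\<lambda>t. c*t^3/3) (-a)"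
    unfolding set_lebesgue_integral_def
  proof (rule integral_FTC_atLeastAtMost)
    show "- a \<le> a" using assms by simp
    fix t :: real
    have "((\<lambda>t. c*t^3/3) has_real_derivative c * t^2) (at t)"
      by (auto intro!: derivative_eq_intros simp: power2_eq_square)
    then have "((\<lambda>t. c*t^3/3) has_real_derivative c * t^2) (at t within {-a..a})"
      by (rule has_field_derivative_at_within)
    then show "((\<lambda>t. c*t^3/3) has_vector_derivative c * t^2) (at t within {-a..a})"
      by (simp add: has_real_derivative_iff_has_vector_derivative)
  next
    show "continuous_on {-a..a} (\<lambda>t. c * t^2)" by (intro continuous_intros)
  qed
  then show ?thesis by (simp add: power3_eq_cube)
qed

lemma Dz_eq:
  fixes x y :: real
  assumes "y \<noteq> 0"
  shows "Dz (Complex x y) = {t. \<bar>t\<bar> \<le> 1 \<and> \<bar>t\<bar> * (x^2+y^2) \<le> 1 \<and> \<bar>t * (2*x)\<bar> \<le> 1}"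
proof -
  have im: "Im ((Complex x y)^2) / Im (Complex x y) = 2*x"
    using assms by (simp add: power2_eq_square)
  have c1: "Complex x y - of_real (2*x) = Complex (-x) y"
    by (simp add: complex_eq_iff)
  have n1: "cmod (Complex x y) * cmod (Complex (-x) y) = x^2+y^2"
    by (simp add: cmod_def)
  have "cmod (Complex x y * of_real t * (Complex x y - of_real (2*x))) = \<bar>t\<bar> * (x^2+y^2)" for t
    unfolding c1 norm_mult using n1 by (simp add: algebra_simps)
  then show ?thesis unfolding Dz_def im by auto
qed

lemma psi_eq:
  fixes x y a :: real
  assumes "y \<noteq> 0" and "a \<ge> 0"
    and D: "Dz (Complex x y) = {-a..a}"
  shows "psi (Complex x y) = 8 * \<bar>y\<bar> * a^3 / 3"
proof -
  have im: "Im ((Complex x y)^2) / Im (Complex x y) = 2*x"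
    using assms by (simp add: power2_eq_square)
  have c2: "2 * Complex x y - of_real (2*x) = Complex 0 (2*y)"
    by (simp add: complex_eq_iff)
  have "(cmod (of_real t * (2 * Complex x y - of_real (2*x))))^2 = (4*y^2) * t^2" for t
    unfolding c2 norm_mult by (simp add: cmod_def power_mult_distrib)
  then have "psi (Complex x y) = (1/\<bar>y\<bar>) * (LINT t:{-a..a}|lborel. (4*y^2) * t^2)"
    unfolding psi_def im D by simp
  also have "\<dots> = (1/\<bar>y\<bar>) * (2*(4*y^2)*a^3/3)" unfolding int_sq[OF assms(2)] ..
  also have "\<dots> = 8 * \<bar>y\<bar> * a^3 / 3"
  proof -
    have "y^2 = \<bar>y\<bar> * \<bar>y\<bar>" by (simp add: power2_eq_square)
    then show ?thesis using assms(1) by (simp add: field_simps)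
  qed
  finally show ?thesis .
qed

theorem mainTheorem7:
  fixes x y :: real
  assumes "y \<noteq> 0"
  shows "(x^2 + y^2 \<le> 1 \<and> \<bar>x\<bar> \<le> 1/2 \<longrightarrow> psi (Complex x y) = 8/3 * \<bar>y\<bar>)
       \<and> ((\<bar>x\<bar> - 1)^2 + y^2 \<le> 1 \<and> \<bar>x\<bar> > 1/2 \<longrightarrow> psi (Complex x y) = \<bar>y\<bar> / (3 * \<bar>x\<bar>^3))
       \<and> ((\<bar>x\<bar> - 1)^2 + y^2 > 1 \<and> x^2 + y^2 > 1 \<longrightarrow> psi (Complex x y) = 8 * \<bar>y\<bar> / (3 * (x^2 + y^2)^3))"
proof (intro conjI impI)
  have r: "x^2+y^2 > 0" using assms by (simp add: sum_power2_gt_zero_iff)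
  assume h: "x^2 + y^2 \<le> 1 \<and> \<bar>x\<bar> \<le> 1/2"
  have "Dz (Complex x y) = {-1..1}"
    unfolding Dz_eq[OF assms]
  proof (intro set_eqI iffI)
    fix t assume "t \<in> {-1..(1::real)}"
    then have t: "\<bar>t\<bar> \<le> 1" by auto
    have "\<bar>t\<bar> * (x^2+y^2) \<le> 1 * 1" using t h r by (intro mult_mono) auto
    moreover have "\<bar>t\<bar> * \<bar>2*x\<bar> \<le> 1 * 1" using t h by (intro mult_mono) auto
    ultimately show "t \<in> {t. \<bar>t\<bar> \<le> 1 \<and> \<bar>t\<bar> * (x^2+y^2) \<le> 1 \<and> \<bar>t * (2*x)\<bar> \<le> 1}"
      using t by (simp add: abs_mult)
  qed auto
  from psi_eq[OF assms _ this] show "psi (Complex x y) = 8/3 * \<bar>y\<bar>" by simp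
next
  have r: "x^2+y^2 > 0" using assms by (simp add: sum_power2_gt_zero_iff)
  assume h: "(\<bar>x\<bar> - 1)^2 + y^2 \<le> 1 \<and> \<bar>x\<bar> > 1/2"
  have h2: "x^2+y^2 \<le> 2*\<bar>x\<bar>" using h by (simp add: power2_eq_square algebra_simps abs_mult_self_eq)
  have xp: "\<bar>x\<bar> > 0" using h by linarith
  have "Dz (Complex x y) = {-(1/(2*\<bar>x\<bar>))..1/(2*\<bar>x\<bar>)}"
    unfolding Dz_eq[OF assms]
  proof (intro set_eqI iffI)
    fix t assume "t \<in> {-(1/(2*\<bar>x\<bar>))..1/(2*\<bar>x\<bar>)}"
    then have "\<bar>t\<bar> \<le> 1/(2*\<bar>x\<bar>)" by (simp add: abs_le_iff)
    then have t: "\<bar>t\<bar> * (2*\<bar>x\<bar>) \<le> 1" using xp by (simp add: field_simps)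
    have "\<bar>t\<bar> * (x^2+y^2) \<le> \<bar>t\<bar> * (2*\<bar>x\<bar>)" using h2 by (intro mult_left_mono) auto
    moreover have "\<bar>t\<bar> * 1 \<le> \<bar>t\<bar> * (2*\<bar>x\<bar>)" using h by (intro mult_left_mono) auto
    then have "\<bar>t\<bar> \<le> 1" using t by linarith
    ultimately show "t \<in> {t. \<bar>t\<bar> \<le> 1 \<and> \<bar>t\<bar> * (x^2+y^2) \<le> 1 \<and> \<bar>t * (2*x)\<bar> \<le> 1}"
      using t by (simp add: abs_mult)
  next
    fix t assume "t \<in> {t. \<bar>t\<bar> \<le> 1 \<and> \<bar>t\<bar> * (x^2+y^2) \<le> 1 \<and> \<bar>t * (2*x)\<bar> \<le> 1}"
    then have "\<bar>t\<bar> * (2*\<bar>x\<bar>) \<le> 1" by (simp add: abs_mult)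
    then have "\<bar>t\<bar> \<le> 1/(2*\<bar>x\<bar>)" using xp by (simp add: field_simps)
    then show "t \<in> {-(1/(2*\<bar>x\<bar>))..1/(2*\<bar>x\<bar>)}" by (simp add: abs_le_iff)
  qed
  from psi_eq[OF assms _ this] xp show "psi (Complex x y) = \<bar>y\<bar> / (3 * \<bar>x\<bar>^3)"
    by (simp add: power_divide power_mult_distrib)
next
  have r: "x^2+y^2 > 0" using assms by (simp add: sum_power2_gt_zero_iff)
  assume h: "(\<bar>x\<bar> - 1)^2 + y^2 > 1 \<and> x^2 + y^2 > 1"
  have h2: "x^2+y^2 > 2*\<bar>x\<bar>" using h by (simp add: power2_eq_square algebra_simps abs_mult_self_eq)
  have "Dz (Complex x y) = {-(1/(x^2+y^2))..1/(x^2+y^2)}"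
    unfolding Dz_eq[OF assms]
  proof (intro set_eqI iffI)
    fix t assume "t \<in> {-(1/(x^2+y^2))..1/(x^2+y^2)}"
    then have "\<bar>t\<bar> \<le> 1/(x^2+y^2)" by (simp add: abs_le_iff)
    then have t: "\<bar>t\<bar> * (x^2+y^2) \<le> 1" using r by (simp add: field_simps)
    have "\<bar>t\<bar> * (2*\<bar>x\<bar>) \<le> \<bar>t\<bar> * (x^2+y^2)" using h2 by (intro mult_left_mono) auto
    moreover have "\<bar>t\<bar> * 1 \<le> \<bar>t\<bar> * (x^2+y^2)" using h by (intro mult_left_mono) auto
    ultimately show "t \<in> {t. \<bar>t\<bar> \<le> 1 \<and> \<bar>t\<bar> * (x^2+y^2) \<le> 1 \<and> \<bar>t * (2*x)\<bar> \<le> 1}"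
      using t by (simp add: abs_mult)
  next
    fix t assume "t \<in> {t. \<bar>t\<bar> \<le> 1 \<and> \<bar>t\<bar> * (x^2+y^2) \<le> 1 \<and> \<bar>t * (2*x)\<bar> \<le> 1}"
    then have "\<bar>t\<bar> * (x^2+y^2) \<le> 1" by simp
    then have "\<bar>t\<bar> \<le> 1/(x^2+y^2)" using r by (simp add: field_simps)
    then show "t \<in> {-(1/(x^2+y^2))..1/(x^2+y^2)}" by (simp add: abs_le_iff)
  qed
  from psi_eq[OF assms _ this] r show "psi (Complex x y) = 8 * \<bar>y\<bar> / (3 * (x^2 + y^2)^3)"
    by (simp add: power_divide)
qed

end
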